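(* There exist universal positive constants $K_1,K_2$ such that for all integers $N,P\ge 2$, with $x=\frac{\log N}{N}+\frac{\log P}{P}$, $$\frac{\mathrm{Vol}(\mathscr B)}{\mathrm{Vol}(\mathscr B_0)}\le K_1\sqrt{x}+K_2\,x^{3/2}.$$
   Context: $\log$ is base 2. For a probability vector $(z_1,\ldots,z_I)$, $H(z_1,\ldots,z_I)=\sum_i z_i\log(1/z_i)$. Let $\mathscr B_0\subset[0,1]^3$ be the set of points $(\overline a,f_0,f_1)$ with $0<\overline a,f_0,f_1<1$ and $f_0+f_1<1$ (so $\mathrm{Vol}(\mathscr B_0)=1/2$). Given $N,P$, let $\mathscr B\subset\mathscr B_0$ be the set of points $(\overline a,f_0,f_1)\in\mathscr B_0$ with $$H(\overline a,1-\overline a)-H(f_0,f_1,1-f_0-f_1)+(f_0+f_1)\in\left(-x,\,x\right],\qquad x=\frac{\log N}{N}+\frac{\log P}{P}.$$ $\mathrm{Vol}$ denotes Lebesgue measure in $\mathbb R^3$. *)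

theory Defs
  imports "HOL-Analysis.Analysis"
begin

definition ent :: "real \<Rightarrow> real" where
  "ent z = z * log 2 (1 / z)"

definition H2 :: "real \<Rightarrow> real" where
  "H2 a = ent a + ent (1 - a)"

definition H3 :: "real \<Rightarrow> real \<Rightarrow> real" where
  "H3 f0 f1 = ent f0 + ent f1 + ent (1 - f0 - f1)"

definition B0 :: "(real \<times> real \<times> real) set" where
  "B0 = {(a, f0, f1). 0 < a \<and> a < 1 \<and> 0 < f0 \<and> f0 < 1 \<and> 0 < f1 \<and> f1 < 1 \<and> f0 + f1 < 1}"

definition xpar :: "nat \<Rightarrow> nat \<Rightarrow> real" where
  "xpar N P = log 2 (real N) / real N + log 2 (real P) / real P"

definition Bset :: "nat \<Rightarrow> nat \<Rightarrow> (real \<times> real \<times> real) set" where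
  "Bset N P = {(a, f0, f1) \<in> B0.
     - xpar N P < H2 a - H3 f0 f1 + (f0 + f1) \<and> H2 a - H3 f0 f1 + (f0 + f1) \<le> xpar N P}"

end

theory Submission imports Defs begin

lemma ent_deriv: assumes "z > 0"
  shows "(ent has_real_derivative (- (ln z + 1) / ln 2)) (at z)"
proof -
  have "((\<lambda>z. - (z * ln z) / ln 2) has_real_derivative (- (ln z + 1) / ln 2)) (at z)"
    using assms by (auto intro!: derivative_eq_intros simp: field_simps)
  moreover have "\<forall>\<^sub>F w in nhds z. - (w * ln w) / ln 2 = ent w"
    using eventually_nhds_in_open[of "{0<..}" z] assms
    by (auto elim!: eventually_mono simp: ent_def log_def ln_div)
  ultimately show ?thesis
    by (subst DERIV_cong_ev[OF refl, symmetric]) (auto simp: eventually_mono)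
qed

lemma H2_deriv: assumes "0 < t" "t < 1"
  shows "(H2 has_real_derivative ((ln (1-t) - ln t) / ln 2)) (at t)"
proof -
  have "((\<lambda>t. ent t + ent (1 - t)) has_real_derivative
     (- (ln t + 1) / ln 2 + (- (ln (1-t) + 1) / ln 2) * (-1))) (at t)"
  proof -
    have e1: "(ent has_real_derivative (- (ln t + 1) / ln 2)) (at t)" using assms ent_deriv by auto
    have e2: "((\<lambda>z. ent (1 - z)) has_real_derivative (- (ln (1-t) + 1) / ln 2) * (-1)) (at t)"
      by (rule DERIV_chain2[OF ent_deriv]) (use assms in \<open>auto intro!: derivative_eq_intros\<close>)
    show ?thesis using DERIV_add[OF e1 e2] by simp
  qed
  moreover have "(- (ln t + 1) / ln 2 + (- (ln (1-t) + 1) / ln 2) * (-1)) = (ln (1-t) - ln t) / ln 2"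
    by (simp add: field_simps)
  ultimately show ?thesis unfolding H2_def[abs_def] by simp
qed

lemma H2_sym: "H2 (1 - a) = H2 a"
  unfolding H2_def by simp

lemma H2_gap: assumes "0 < a" "a \<le> b" "b \<le> 1/2"
  shows "H2 b - H2 a \<ge> (b - a)^2"
proof -
  define phi where "phi t = H2 t + (b - t)^2" for t
  have "phi a \<le> phi b"
  proof (rule DERIV_nonneg_imp_nondecreasing[OF assms(2)])
    fix t assume t1: "a \<le> t" and t2: "t \<le> b"
    have t: "a \<le> t \<and> t \<le> b" using t1 t2 by simp
    hence t0: "0 < t" "t < 1" "t \<le> 1/2" using assms by auto
    have d: "(phi has_real_derivative ((ln (1-t) - ln t) / ln 2 + 2 * (b - t) * (-1))) (at t)"
      unfolding phi_def[abs_def]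
      by (auto intro!: derivative_eq_intros H2_deriv t0)
    have "ln (t / (1-t)) \<le> t/(1-t) - 1" using t0 by (intro ln_le_minus_one) auto
    hence l1: "ln (1-t) - ln t \<ge> (1 - 2*t)/(1-t)" using t0 by (simp add: ln_div field_simps)
    have "(1 - 2*t)/(1-t) \<ge> 1 - 2*t" using t0 by (simp add: field_simps)
    hence l2a: "ln (1-t) - ln t \<ge> 1 - 2*t" using l1 by linarith

    have l2b: "1 - 2*t \<ge> 2 * (b - t)" using assms(3) by (simp add: algebra_simps)
    have l2: "ln (1-t) - ln t \<ge> 2 * (b - t)" using l2a l2b by linarith
    have "ln 2 > (0::real)" "ln 2 < (1::real)" using ln_2_less_1 by auto
    have "(ln (1-t) - ln t) / ln 2 \<ge> ln (1-t) - ln t"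
      using l2 t `ln 2 > 0` `ln 2 < 1`
      by (subst pos_le_divide_eq) (auto intro!: mult_left_le)
    thus "\<exists>y. (phi has_real_derivative y) (at t) \<and> 0 \<le> y"
      using d l2 by (intro exI[of _ "(ln (1-t) - ln t) / ln 2 + 2 * (b - t) * (-1)"]) auto
  qed
  thus ?thesis unfolding phi_def by (simp add: power2_eq_square)
qed

definition mm :: "real \<Rightarrow> real" where "mm a = min a (1 - a)"

lemma H2_mm: "H2 (mm a) = H2 a"
  unfolding mm_def min_def using H2_sym by auto

lemma mm_close:
  assumes "0 < a" "a < 1" "0 < b" "b < 1" "\<bar>H2 a - H2 b\<bar> < y"
  shows "\<bar>mm a - mm b\<bar> < sqrt y"
proof -
  have r: "0 < mm a" "mm a \<le> 1/2" "0 < mm b" "mm b \<le> 1/2" using assms unfolding mm_def min_def by auto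
  have "(mm a - mm b)^2 \<le> \<bar>H2 (mm a) - H2 (mm b)\<bar>"
  proof (cases "mm a \<le> mm b")
    case True
    from H2_gap[OF r(1) True r(4)] show ?thesis by (simp add: power2_commute)
  next
    case False
    from H2_gap[OF r(3) _ r(2)] False show ?thesis by (simp add: power2_commute)
  qed
  also have "\<dots> < y" using assms(5) by (simp add: H2_mm)
  finally have "sqrt ((mm a - mm b)^2) < sqrt y" by (rule real_sqrt_less_mono)
  thus ?thesis by simp
qed

lemma slice_bound:
  assumes "x \<ge> 0"
  shows "emeasure lborel {a. 0<a \<and> a<1 \<and> -x < H2 a - c \<and> H2 a - c \<le> x} \<le> ennreal (4 * sqrt (2*x))"
    (is "emeasure lborel ?S \<le> _")
proof (cases "?S = {}")
  case True thus ?thesis by (simp only: emeasure_empty) simp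
next
  case False
  then obtain a0 where a0: "a0 \<in> ?S" by blast
  define r where "r = sqrt (2*x)"
  define m0 where "m0 = mm a0"
  have r0: "r \<ge> 0" using assms unfolding r_def by simp
  have sub: "?S \<subseteq> {m0 - r .. m0 + r} \<union> {1 - m0 - r .. 1 - m0 + r}"
  proof
    fix a assume a: "a \<in> ?S"
    have "\<bar>mm a - mm a0\<bar> < r" unfolding r_def
      using a a0 by (intro mm_close) auto
    thus "a \<in> {m0 - r .. m0 + r} \<union> {1 - m0 - r .. 1 - m0 + r}"
      unfolding m0_def mm_def min_def by (auto split: if_splits)
  qed
  have "emeasure lborel ?S \<le> emeasure lborel ({m0 - r .. m0 + r} \<union> {1 - m0 - r .. 1 - m0 + r})"
    by (rule emeasure_mono[OF sub]) auto
  also have "\<dots> \<le> emeasure lborel {m0 - r .. m0 + r} + emeasure lborel {1 - m0 - r .. 1 - m0 + r}"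
    by (rule emeasure_subadditive) auto
  also have "\<dots> = ennreal (2*r) + ennreal (2*r)" using r0 by simp
  also have "\<dots> = ennreal (4 * sqrt (2*x))" using r0 unfolding r_def
    by (simp add: ennreal_plus[symmetric] del: ennreal_plus)
  finally show ?thesis .
qed

lemma ent_meas[measurable]: "ent \<in> borel_measurable borel"
  unfolding ent_def by measurable

lemma H2_meas[measurable]: "H2 \<in> borel_measurable borel"
  unfolding H2_def[abs_def] by measurable


lemma Bset_meas: "Bset N P \<in> sets borel"
proof -
  have "Bset N P = {p \<in> space (borel \<Otimes>\<^sub>M (borel \<Otimes>\<^sub>M borel)). (0 < fst p \<and> fst p < 1 \<and> 0 < fst (snd p) \<and> fst (snd p) < 1
     \<and> 0 < snd (snd p) \<and> snd (snd p) < 1 \<and> fst (snd p) + snd (snd p) < 1) \<and>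
     - xpar N P < H2 (fst p) - H3 (fst (snd p)) (snd (snd p)) + (fst (snd p) + snd (snd p)) \<and>
     H2 (fst p) - H3 (fst (snd p)) (snd (snd p)) + (fst (snd p) + snd (snd p)) \<le> xpar N P}"
    unfolding Bset_def B0_def by (auto simp: space_pair_measure)
  also have "\<dots> \<in> sets (borel \<Otimes>\<^sub>M (borel \<Otimes>\<^sub>M borel))" unfolding H3_def by measurable
  finally show ?thesis by (metis borel_prod)
qed

lemma B0_meas: "B0 \<in> sets borel"
proof -
  have "B0 = {p \<in> space (borel \<Otimes>\<^sub>M (borel \<Otimes>\<^sub>M borel)). (0 < fst p \<and> fst p < 1 \<and> 0 < fst (snd p) \<and> fst (snd p) < 1
     \<and> 0 < snd (snd p) \<and> snd (snd p) < 1 \<and> fst (snd p) + snd (snd p) < 1)}"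
    unfolding B0_def by (auto simp: space_pair_measure)
  also have "\<dots> \<in> sets (borel \<Otimes>\<^sub>M (borel \<Otimes>\<^sub>M borel))" unfolding H3_def by measurable
  finally show ?thesis by (metis borel_prod)
qed

lemma emeasure_lborel_Times:
  fixes A :: "'a::euclidean_space set" and B :: "'b::euclidean_space set"
  assumes "A \<in> sets borel" "B \<in> sets borel"
  shows "emeasure lborel (A \<times> B) = emeasure lborel A * emeasure lborel B"
  by (subst lborel_prod[symmetric], rule lborel.emeasure_pair_measure_Times) (use assms in auto)

lemma xpar_nonneg: assumes "N \<ge> 2" "P \<ge> 2" shows "xpar N P \<ge> 0"
  unfolding xpar_def using assms by (intro add_nonneg_nonneg divide_nonneg_nonneg) auto

lemma opens_meas: "{a<..<b::real} \<times> ({c<..<d::real} \<times> {e<..<f::real}) \<in> sets borel"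
  "{c<..<d::real} \<times> {e<..<f::real} \<in> sets borel"
  by (intro borel_open open_Times open_greaterThanLessThan)+

lemma box2: "emeasure lborel ({0<..<1::real} \<times> {0<..<1::real}) = 1"
  by (subst emeasure_lborel_Times) auto

lemma Bset_emeasure:
  assumes "x = xpar N P" "x \<ge> 0"
  shows "emeasure lborel (Bset N P) \<le> ennreal (4 * sqrt (2*x))"
proof -
  have M: "Bset N P \<in> sets (lborel \<Otimes>\<^sub>M lborel)"
  proof -
    have "sets (lborel \<Otimes>\<^sub>M lborel) = sets (lborel :: (real \<times> real \<times> real) measure)"
      by (simp only: lborel_prod)
    thus ?thesis using Bset_meas[of N P] by simp
  qed
  have "emeasure lborel (Bset N P) = emeasure (lborel \<Otimes>\<^sub>M lborel) (Bset N P)"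
    by (simp only: lborel_prod)
  also have "\<dots> = (\<integral>\<^sup>+y. emeasure lborel ((\<lambda>a. (a, y)) -` Bset N P) \<partial>lborel)"
    by (rule lborel_pair.emeasure_pair_measure_alt2[OF M])
  also have "\<dots> \<le> (\<integral>\<^sup>+y. ennreal (4 * sqrt (2*x)) * indicator ({0<..<1::real} \<times> {0<..<1::real}) y \<partial>lborel)"
  proof (rule nn_integral_mono)
    fix y :: "real \<times> real"
    obtain f0 f1 where y: "y = (f0, f1)" by (cases y)
    show "emeasure lborel ((\<lambda>a. (a, y)) -` Bset N P)
          \<le> ennreal (4 * sqrt (2*x)) * indicator ({0<..<1::real} \<times> {0<..<1::real}) y"
    proof (cases "0 < f0 \<and> f0 < 1 \<and> 0 < f1 \<and> f1 < 1 \<and> f0 + f1 < 1")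
      case True
      have eq1: "(\<lambda>a. (a, y)) -` Bset N P = {a. 0<a \<and> a<1 \<and> -x < H2 a - (H3 f0 f1 - (f0 + f1))
                  \<and> H2 a - (H3 f0 f1 - (f0 + f1)) \<le> x}"
        (is "_ = ?S")
      proof (rule set_eqI)
        fix a
        show "a \<in> (\<lambda>a. (a, y)) -` Bset N P \<longleftrightarrow> a \<in> ?S"
          using True unfolding y Bset_def B0_def assms(1) vimage_def mem_Collect_eq case_prod_conv
          by (intro iffI conjI; elim conjE; (intro conjI)?; linarith)
      qed
      have eq2: "indicator ({0<..<1::real} \<times> {0<..<1::real}) y = (1::ennreal)"
        using True y by (simp add: indicator_def)
      show ?thesis using slice_bound[OF assms(2), of "H3 f0 f1 - (f0 + f1)"]
        by (simp only: eq1 eq2 mult_1_right)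
    next
      case False
      have "(\<lambda>a. (a, y)) -` Bset N P = {}"
        using False unfolding y Bset_def B0_def by auto
      thus ?thesis by (simp only: emeasure_empty) simp
    qed
  qed
  also have "\<dots> = ennreal (4 * sqrt (2*x)) * emeasure lborel ({0<..<1::real} \<times> {0<..<1::real})"
    by (rule nn_integral_cmult_indicator) (simp add: opens_meas)
  also have "\<dots> = ennreal (4 * sqrt (2*x))" by (simp add: box2)
  finally show ?thesis .
qed

lemma B0_emeasure_lower: "emeasure lborel B0 \<ge> ennreal (1/4)"
proof -
  have e: "emeasure lborel ({0<..<1/2::real} \<times> {0<..<1/2::real}) = ennreal (1/4)"
    by (subst emeasure_lborel_Times) (auto simp: ennreal_mult[symmetric] simp del: ennreal_half)
  have 1: "emeasure lborel ({0<..<1::real} \<times> ({0<..<1/2::real} \<times> {0<..<1/2::real})) = ennreal (1/4)"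
    by (subst emeasure_lborel_Times) (auto simp: opens_meas e)
  have sub: "{0<..<1::real} \<times> ({0<..<1/2::real} \<times> {0<..<1/2::real}) \<subseteq> B0"
    unfolding B0_def by auto
  have "emeasure lborel ({0<..<1::real} \<times> ({0<..<1/2::real} \<times> {0<..<1/2::real})) \<le> emeasure lborel B0"
    by (rule emeasure_mono[OF sub]) (simp add: B0_meas)
  thus ?thesis using 1 by simp
qed

lemma B0_emeasure_upper: "emeasure lborel B0 < \<infinity>"
proof -
  have sub: "B0 \<subseteq> {0<..<1::real} \<times> ({0<..<1::real} \<times> {0<..<1::real})"
    unfolding B0_def by auto
  have "emeasure lborel B0 \<le> emeasure lborel ({0<..<1::real} \<times> ({0<..<1::real} \<times> {0<..<1::real}))"
    by (rule emeasure_mono[OF sub]) (simp add: opens_meas)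
  also have "\<dots> = 1" by (subst emeasure_lborel_Times) (auto simp: opens_meas box2)
  finally show ?thesis by (simp add: order_le_less_trans)
qed

theorem mainTheorem6:
  shows "\<exists>K1 K2 :: real. K1 > 0 \<and> K2 > 0 \<and>
    (\<forall>N P :: nat. N \<ge> 2 \<longrightarrow> P \<ge> 2 \<longrightarrow>
       measure lborel (Bset N P) / measure lborel B0
         \<le> K1 * sqrt (xpar N P) + K2 * xpar N P powr (3/2))"
proof (rule exI[of _ 32], rule exI[of _ 1], intro conjI allI impI)
  fix N P :: nat assume N: "N \<ge> 2" and P: "P \<ge> 2"
  define x where "x = xpar N P"
  have x0: "x \<ge> 0" unfolding x_def using xpar_nonneg[OF N P] .
  have b1: "measure lborel (Bset N P) \<le> 4 * sqrt (2*x)"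
    unfolding measure_def using Bset_emeasure[OF x_def x0]
    by (intro enn2real_leI) (use x0 in auto)
  have b0: "measure lborel B0 \<ge> 1/4"
  proof -
    have "enn2real (ennreal (1/4)) \<le> enn2real (emeasure lborel B0)"
      by (rule enn2real_mono[OF B0_emeasure_lower]) (use B0_emeasure_upper in simp)
    thus ?thesis unfolding measure_def by simp
  qed
  have m0: "measure lborel (Bset N P) \<ge> 0" by simp
  have "sqrt (2*x) \<le> 2 * sqrt x"
  proof -
    have s2: "sqrt 2 \<le> (2::real)" by (rule real_le_lsqrt) auto
    have "sqrt (2*x) = sqrt 2 * sqrt x" by (simp add: real_sqrt_mult)
    also have "\<dots> \<le> 2 * sqrt x" by (rule mult_right_mono[OF s2]) (simp add: x0)
    finally show ?thesis .
  qed
  hence b1': "measure lborel (Bset N P) \<le> 8 * sqrt x" using b1 by linarith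
  have "measure lborel (Bset N P) / measure lborel B0 \<le> (8 * sqrt x) / (1/4)"
    using b1' b0 m0 x0 by (intro frac_le) auto
  also have "\<dots> = 32 * sqrt x" by simp
  also have "\<dots> \<le> 32 * sqrt x + 1 * x powr (3/2)" by simp
  finally show "measure lborel (Bset N P) / measure lborel B0
         \<le> 32 * sqrt (xpar N P) + 1 * xpar N P powr (3/2)" using x_def by simp
qed auto

end
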